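(* Let $q\ge 2$ be an integer, $s\in(0,2)$, and let $P(x,t)=|\Psi(x,t)|^2$ be as in the context. Put $\langle x\rangle(t)=\int_0^\pi x\,P(x,t)\,dx$. If $q$ is even, then $$\langle x\rangle(t)=\frac{\pi}{2}-\frac{16}{\pi}\big(1-q^{2(s-2)}\big)\sum_{k=1}^{\infty}\frac{q^{k(s-1)}}{(q^{2k}-1)^2}\cos\big((q^{2k}-1)t\big),$$ and $\langle x\rangle$ is continuously differentiable, with $$\frac{d\langle x\rangle}{dt}(t)=\frac{16}{\pi}\big(1-q^{2(s-2)}\big)\sum_{k=1}^\infty\frac{q^{k(s-1)}}{q^{2k}-1}\sin\big((q^{2k}-1)t\big),$$ an absolutely and uniformly convergent series. If $q$ is odd, then $\langle x\rangle(t)=\pi/2$ for all $t$.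
   Context: For an integer $q\ge2$ and $s\in(0,2)$ define, for $x\in[0,\pi]$ and $t\in\mathbb R$, $$\Psi(x,t)=N\sum_{n=0}^{\infty} q^{n(s-2)}\sin(q^n x)\,e^{-i q^{2n} t},\qquad N=\sqrt{\tfrac{2}{\pi}\big(1-q^{2(s-2)}\big)},$$ and let $P(x,t)=|\Psi(x,t)|^2$. *)

theory Defs
  imports "HOL-Analysis.Analysis"
begin

definition normN :: "nat \<Rightarrow> real \<Rightarrow> real" where
  "normN q s = sqrt (2 / pi * (1 - real q powr (2 * (s - 2))))"

definition Psi :: "nat \<Rightarrow> real \<Rightarrow> real \<Rightarrow> real \<Rightarrow> complex" where
  "Psi q s x t = complex_of_real (normN q s) *
     (\<Sum>n. complex_of_real (real q powr (real n * (s - 2)) * sin (real q ^ n * x))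
           * exp (- \<i> * complex_of_real (real q ^ (2 * n) * t)))"

definition Pdens :: "nat \<Rightarrow> real \<Rightarrow> real \<Rightarrow> real \<Rightarrow> real" where
  "Pdens q s x t = (cmod (Psi q s x t))\<^sup>2"

definition avgx :: "nat \<Rightarrow> real \<Rightarrow> real \<Rightarrow> real" where
  "avgx q s t = integral {0..pi} (\<lambda>x. x * Pdens q s x t)"

end

theory Submission
  imports Defs
begin


definition Cv :: "int \<Rightarrow> real" where
  "Cv L = (if L = 0 then pi^2/2 else if even L then 0 else -2/(of_int L)^2)"

lemma cint: "((\<lambda>x. x * cos (of_int L * x)) has_integral Cv L) {0..pi}"
proof (cases "L = 0")
  case True
  have "((\<lambda>x. x) has_integral ((\<lambda>x. x^2/2) pi - (\<lambda>x. x^2/2) 0)) {0..pi}"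
    by (rule fundamental_theorem_of_calculus) (auto intro!: derivative_eq_intros simp: has_real_derivative_iff_has_vector_derivative[symmetric])
  then show ?thesis using True by (simp add: Cv_def)
next
  case False
  define F :: "real \<Rightarrow> real" where "F x = x * sin (of_int L * x) / of_int L + cos (of_int L * x) / (of_int L)^2" for x
  have "((\<lambda>x. x * cos (of_int L * x)) has_integral (F pi - F 0)) {0..pi}"
  proof (rule fundamental_theorem_of_calculus)
    fix x assume "x \<in> {0..pi}"
    have "(F has_real_derivative x * cos (of_int L * x)) (at x within {0..pi})"
      unfolding F_def using False
      by (auto intro!: derivative_eq_intros simp: field_simps power2_eq_square)
    then show "(F has_vector_derivative x * cos (of_int L * x)) (at x within {0..pi})"
      by (simp add: has_real_derivative_iff_has_vector_derivative)
  qed simp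
  moreover have "F pi - F 0 = Cv L"
  proof -
    have s: "sin (of_int L * pi) = 0" using sin_npi_int[of L] by (simp add: mult.commute)
    have c: "cos (of_int L * pi) = (if even L then 1 else -1)" using cos_npi_int[of L] by (simp add: mult.commute)
    show ?thesis using False by (simp add: F_def Cv_def s c field_simps)
  qed
  ultimately show ?thesis by simp
qed

definition Jv :: "nat \<Rightarrow> nat \<Rightarrow> real" where
  "Jv j k = (Cv (int j - int k) - Cv (int j + int k)) / 2"

lemma jint: "((\<lambda>x. x * (sin (real j * x) * sin (real k * x))) has_integral Jv j k) {0..pi}"
proof -
  have "((\<lambda>x. (x * cos (of_int (int j - int k) * x) - x * cos (of_int (int j + int k) * x)) / 2)
     has_integral (Cv (int j - int k) - Cv (int j + int k)) / 2) {0..pi}"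
    by (intro has_integral_divide has_integral_diff cint)
  moreover have "(\<lambda>x. (x * cos (of_int (int j - int k) * x) - x * cos (of_int (int j + int k) * x)) / 2)
     = (\<lambda>x. x * (sin (real j * x) * sin (real k * x)))"
    by (auto simp: sin_times_sin algebra_simps fun_eq_iff)
  ultimately show ?thesis by (simp add: Jv_def)
qed

lemma Jv_diag: "j \<ge> 1 \<Longrightarrow> Jv j j = pi^2/4"
  by (simp add: Jv_def Cv_def)

lemma Jv_even: "j \<noteq> k \<Longrightarrow> even (j + k) \<Longrightarrow> Jv j k = 0"
proof -
  assume a: "j \<noteq> k" "even (j+k)"
  have "even (int j - int k)" "even (int j + int k)" using a
    by (metis even_of_nat_iff of_nat_add even_diff)+
  moreover have "int j - int k \<noteq> 0" "int j + int k \<noteq> 0" using a by auto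
  ultimately show ?thesis by (simp add: Jv_def Cv_def)
qed

lemma Jv_odd: "odd (j + k) \<Longrightarrow> Jv j k = - 4 * real j * real k / ((real j)^2 - (real k)^2)^2"
proof -
  assume a: "odd (j+k)"
  have o: "odd (int j - int k)" "odd (int j + int k)" using a
    by (metis even_of_nat_iff of_nat_add even_diff)+
  then have n: "int j - int k \<noteq> 0" "int j + int k \<noteq> 0" by (metis even_zero)+
  then have n': "real j - real k \<noteq> 0" "real j + real k \<noteq> 0" by linarith+
  have e1: "Jv j k = - 1/(real j - real k)^2 + 1/(real j + real k)^2"
    using o n by (simp add: Jv_def Cv_def)
  have e2: "(real j)^2 - (real k)^2 = (real j - real k) * (real j + real k)" by (simp add: power2_eq_square algebra_simps)
  have "- 1/(real j - real k)^2 + 1/(real j + real k)^2 = ((real j - real k)^2 - (real j + real k)^2) / ((real j - real k) * (real j + real k))^2"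
    using n' by (simp only: power_mult_distrib) (simp add: field_simps)
  also have "(real j - real k)^2 - (real j + real k)^2 = - 4 * real j * real k" by (simp add: power2_eq_square algebra_simps)
  finally show ?thesis using e1 e2 by simp
qed



lemma powr_nat: "0 < (b::real) \<Longrightarrow> b powr (real n * c) = (b powr c)^n"
  by (metis mult.commute powr_powr powr_realpow powr_gt_zero)

definition Uc :: "nat \<Rightarrow> real \<Rightarrow> real \<Rightarrow> nat \<Rightarrow> real \<Rightarrow> real" where
  "Uc q s t n x = real q powr (real n * (s - 2)) * sin (real q ^ n * x) * cos (real q ^ (2*n) * t)"
definition Vs :: "nat \<Rightarrow> real \<Rightarrow> real \<Rightarrow> nat \<Rightarrow> real \<Rightarrow> real" where
  "Vs q s t n x = real q powr (real n * (s - 2)) * sin (real q ^ n * x) * sin (real q ^ (2*n) * t)"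

context
  fixes q :: nat and s :: real
  assumes q2: "q \<ge> 2" and s2: "s < 2"
begin

definition "r = real q powr (s - 2)"

lemma r_pos: "0 < r" and r_lt1: "r < 1"
proof -
  show "0 < r" using q2 by (simp add: r_def)
  have "real q powr (s - 2) < real q powr 0" using q2 s2 by (intro powr_less_mono) auto
  then show "r < 1" using q2 by (simp add: r_def)
qed

lemma a_eq: "real q powr (real n * (s - 2)) = r ^ n"
  using q2 by (simp add: powr_nat r_def)

lemma summable_r: "summable (\<lambda>n. r ^ n)"
  using r_pos r_lt1 by (intro summable_geometric) simp

lemma Uc_bound: "\<bar>Uc q s t n x\<bar> \<le> r ^ n"
proof -
  have "\<bar>Uc q s t n x\<bar> = r^n * (\<bar>sin (real q ^ n * x)\<bar> * \<bar>cos (real q ^ (2*n) * t)\<bar>)"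
    using r_pos by (simp add: Uc_def a_eq abs_mult)
  also have "\<dots> \<le> r^n * 1" using r_pos
    by (intro mult_left_mono mult_le_one) auto
  finally show ?thesis by simp
qed

lemma Vs_bound: "\<bar>Vs q s t n x\<bar> \<le> r ^ n"
proof -
  have "\<bar>Vs q s t n x\<bar> = r^n * (\<bar>sin (real q ^ n * x)\<bar> * \<bar>sin (real q ^ (2*n) * t)\<bar>)"
    using r_pos by (simp add: Vs_def a_eq abs_mult)
  also have "\<dots> \<le> r^n * 1" using r_pos
    by (intro mult_left_mono mult_le_one) auto
  finally show ?thesis by simp
qed

lemma summable_Uc: "summable (\<lambda>n. Uc q s t n x)"
  by (rule summable_comparison_test[OF _ summable_r]) (auto intro: Uc_bound)
lemma summable_Vs: "summable (\<lambda>n. Vs q s t n x)"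
  by (rule summable_comparison_test[OF _ summable_r]) (auto intro: Vs_bound)

lemma Pdens_eq:
  "Pdens q s x t = (normN q s)^2 * ((\<Sum>n. Uc q s t n x)^2 + (\<Sum>n. Vs q s t n x)^2)"
proof -
  define f where "f n = complex_of_real (real q powr (real n * (s - 2)) * sin (real q ^ n * x))
           * exp (- \<i> * complex_of_real (real q ^ (2 * n) * t))" for n
  have Re: "Re (f n) = Uc q s t n x" for n by (simp add: f_def Uc_def Re_exp Im_exp)
  have Im: "Im (f n) = - Vs q s t n x" for n by (simp add: f_def Vs_def Re_exp Im_exp)
  have "(\<lambda>n. Re (f n)) sums (\<Sum>n. Uc q s t n x)" unfolding Re using summable_Uc by (simp add: summable_sums)
  moreover have "(\<lambda>n. Im (f n)) sums (- (\<Sum>n. Vs q s t n x))" unfolding Im using summable_Vs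
    by (intro sums_minus) (simp add: summable_sums)
  ultimately have "f sums Complex (\<Sum>n. Uc q s t n x) (- (\<Sum>n. Vs q s t n x))"
    by (simp add: sums_complex_iff)
  then have "suminf f = Complex (\<Sum>n. Uc q s t n x) (- (\<Sum>n. Vs q s t n x))" by (rule sums_unique[symmetric])
  moreover have "Psi q s x t = complex_of_real (normN q s) * suminf f"
    unfolding Psi_def f_def ..
  ultimately have "Psi q s x t = complex_of_real (normN q s) * Complex (\<Sum>n. Uc q s t n x) (- (\<Sum>n. Vs q s t n x))"
    by simp
  then show ?thesis by (simp add: Pdens_def cmod_power2 power_mult_distrib algebra_simps)
qed


definition fk :: "real \<Rightarrow> nat \<Rightarrow> real \<Rightarrow> real" where
  "fk t k x = (normN q s)^2 * x * ((\<Sum>n<k. Uc q s t n x)^2 + (\<Sum>n<k. Vs q s t n x)^2)"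

definition cf :: "real \<Rightarrow> nat \<Rightarrow> nat \<Rightarrow> real" where
  "cf t m n = (normN q s)^2 * (r^m * r^n * cos ((real q^(2*m) - real q^(2*n)) * t))"

lemma fk_expand: "fk t k x = (\<Sum>m<k. \<Sum>n<k. cf t m n * (x * (sin (real (q^m) * x) * sin (real (q^n) * x))))"
proof -
  have "fk t k x = (normN q s)^2 * x * ((\<Sum>m<k. \<Sum>n<k. Uc q s t m x * Uc q s t n x) + (\<Sum>m<k. \<Sum>n<k. Vs q s t m x * Vs q s t n x))"
    unfolding fk_def power2_eq_square[of "sum _ _"] sum_product ..
  also have "\<dots> = (\<Sum>m<k. \<Sum>n<k. (normN q s)^2 * x * (Uc q s t m x * Uc q s t n x + Vs q s t m x * Vs q s t n x))"
    by (simp add: sum.distrib[symmetric] sum_distrib_left)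
  also have "\<dots> = (\<Sum>m<k. \<Sum>n<k. cf t m n * (x * (sin (real (q^m) * x) * sin (real (q^n) * x))))"
  proof (intro sum.cong refl)
    fix m n
    show "(normN q s)^2 * x * (Uc q s t m x * Uc q s t n x + Vs q s t m x * Vs q s t n x) =
       cf t m n * (x * (sin (real (q^m) * x) * sin (real (q^n) * x)))"
      unfolding Uc_def Vs_def cf_def a_eq by (simp add: left_diff_distrib cos_diff algebra_simps)
  qed
  finally show ?thesis .
qed

lemma fk_int: "(fk t k has_integral (\<Sum>m<k. \<Sum>n<k. cf t m n * Jv (q^m) (q^n))) {0..pi}"
  unfolding fk_expand[abs_def]
  by (intro has_integral_sum finite_lessThan has_integral_mult_right jint)

definition k0 :: "nat \<Rightarrow> real" where
  "k0 n = - 4 * real q ^ n / (real q ^ (2*n) - 1)^2"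

lemma Jv_q: "Jv (q^m) (q^n) = (if m = n then pi^2/4 else if even q \<and> m = 0 then k0 n
    else if even q \<and> n = 0 then k0 m else 0)"
proof -
  have q1: "1 < q" using q2 by simp
  have pos: "q^m \<ge> 1" for m using q1 by simp
  consider "m = n" | "m \<noteq> n" "even q" "m = 0" | "m \<noteq> n" "even q" "n = 0" | "m \<noteq> n" "\<not> (even q \<and> (m = 0 \<or> n = 0))"
    by blast
  then show ?thesis
  proof cases
    case 1 then show ?thesis using Jv_diag[OF pos[of n]] by simp
  next
    case 2
    then have "n \<ge> 1" by simp
    then have "odd (q^m + q^n)" using 2 by simp
    then show ?thesis using 2 by (simp add: Jv_odd k0_def power2_eq_square power_mult algebra_simps)
  next
    case 3
    then have "m \<ge> 1" by simp
    then have "odd (q^m + q^n)" using 3 by simp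
    then show ?thesis using 3 by (simp add: Jv_odd k0_def power2_eq_square power_mult algebra_simps)
  next
    case 4
    have ne: "q^m \<noteq> q^n" using 4 power_inject_exp[OF q1] by blast
    have "even (q^m + q^n)" using 4 by (cases "even q") auto
    then show ?thesis using 4 Jv_even[OF ne] by auto
  qed
qed

lemma dsum: fixes d e :: "nat \<Rightarrow> real" shows "(\<Sum>m<k. \<Sum>n<k. (if m = n then d m else if E \<and> m = 0 then e n else if E \<and> n = 0 then e m else 0))
   = (\<Sum>n<k. d n) + (if E then 2 * (\<Sum>n<k. if n = 0 then 0 else e n) else 0)"
proof (cases k)
  case 0 then show ?thesis by simp
next
  case (Suc k')
  have split: "(if m = n then d m else if E \<and> m = 0 then e n else if E \<and> n = 0 then e m else 0)
     = (if m = n then d m else 0) + (if m = 0 then (if E \<and> n \<noteq> 0 then e n else 0) else 0)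
       + (if n = 0 then (if E \<and> m \<noteq> 0 then e m else 0) else 0)" for m n :: nat
    by auto
  have z: "0 \<in> {..<k}" using Suc by simp
  have "(\<Sum>m<k. \<Sum>n<k. (if m = n then d m else if E \<and> m = 0 then e n else if E \<and> n = 0 then e m else 0))
     = (\<Sum>n<k. d n) + (\<Sum>n<k. (if E \<and> n \<noteq> 0 then e n else 0)) + (\<Sum>m<k. (if E \<and> m \<noteq> 0 then e m else 0))"
  proof -
    have h: "(\<Sum>n<k. if m = 0 then (if E \<and> n \<noteq> 0 then e n else 0) else 0) =
      (if m = 0 then (\<Sum>n<k. if E \<and> n \<noteq> 0 then e n else 0) else 0)" for m by auto
    show ?thesis unfolding split sum.distrib h using z by (simp add: sum.delta sum.delta')
  qed
  also have "\<dots> = (\<Sum>n<k. d n) + (if E then 2 * (\<Sum>n<k. if n = 0 then 0 else e n) else 0)"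
    by (cases E) (auto intro!: sum.cong)
  finally show ?thesis .
qed

lemma summable_Mb: "summable (\<lambda>k. real q powr (real (Suc k) * (s - 1)) / (real q ^ (2 * Suc k) - 1))"
proof (rule summable_comparison_test)
  define g where "g k = 2 * (real q powr (s - 3)) ^ Suc k" for k
  have qp: "0 < real q" using q2 by simp
  have lt: "real q powr (s - 3) < 1"
  proof -
    have "real q powr (s - 3) < real q powr 0" using q2 s2 by (intro powr_less_mono) auto
    then show ?thesis using q2 by simp
  qed
  have "summable (\<lambda>k. (real q powr (s - 3)) ^ Suc k)"
    using summable_Suc_iff[of "\<lambda>k. (real q powr (s - 3)) ^ k"] lt qp
    by (simp add: summable_geometric del: power_Suc)
  then show "summable g" unfolding g_def by (rule summable_mult)
  show "\<exists>N. \<forall>k\<ge>N. norm (real q powr (real (Suc k) * (s - 1)) / (real q ^ (2 * Suc k) - 1)) \<le> g k"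
  proof (intro exI allI impI)
    fix k :: nat
    define X where "X = real q ^ (2 * Suc k)"
    have X4: "X \<ge> 4"
    proof -
      have "real q ^ (2 * Suc k) \<ge> real q ^ 2" using q2 by (intro power_increasing) auto
      moreover have "real q ^ 2 \<ge> 2^2" using q2 by (intro power_mono) auto
      ultimately show ?thesis unfolding X_def by simp
    qed
    have Xp: "X = real q powr (real (Suc k) * 2)" unfolding X_def using powr_realpow[OF qp, of "2 * Suc k"]
      by (simp only: of_nat_mult of_nat_numeral mult.commute)
    have "real q powr (real (Suc k) * (s - 1)) / X = real q powr (real (Suc k) * (s - 3))"
      unfolding Xp by (simp add: powr_diff[symmetric] algebra_simps)
    also have "\<dots> = (real q powr (s - 3)) ^ Suc k" using qp by (simp add: powr_nat del: of_nat_Suc)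
    finally have e: "real q powr (real (Suc k) * (s - 1)) / X = (real q powr (s - 3)) ^ Suc k" .
    have "real q powr (real (Suc k) * (s - 1)) / (X - 1) \<le> real q powr (real (Suc k) * (s - 1)) / (X / 2)"
      using X4 by (intro divide_left_mono) auto
    also have "\<dots> = 2 * (real q powr (real (Suc k) * (s - 1)) / X)" by simp
    finally show "norm (real q powr (real (Suc k) * (s - 1)) / (real q ^ (2 * Suc k) - 1)) \<le> g k"
      using X4 unfolding e g_def X_def[symmetric] by simp
  qed
qed
definition ee :: "real \<Rightarrow> nat \<Rightarrow> real" where
  "ee t n = (normN q s)^2 * (r^n * cos ((real q^(2*n) - 1) * t) * k0 n)"

lemma cos_swap: "cos ((1 - X) * t) = cos ((X - 1) * t)"
proof -
  have "(1 - X) * t = - ((X - 1) * t)" by (simp add: algebra_simps)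
  then show ?thesis by simp
qed

lemma cos_swap2: "cos (t * (1 - X)) = cos (t * (X - 1))"
proof -
  have "t * (1 - X) = - (t * (X - 1))" by (simp add: algebra_simps)
  then show ?thesis by simp
qed

lemma D_eq: "(\<Sum>m<k. \<Sum>n<k. cf t m n * Jv (q^m) (q^n)) =
   (\<Sum>n<k. (normN q s)^2 * pi^2/4 * (r^2)^n) + (if even q then 2 * (\<Sum>n<k. if n = 0 then 0 else ee t n) else 0)"
proof -
  have "cf t m n * Jv (q^m) (q^n) = (if m = n then (normN q s)^2 * pi^2/4 * (r^2)^m else if even q \<and> m = 0 then ee t n
    else if even q \<and> n = 0 then ee t m else 0)" for m n
    unfolding Jv_q by (auto simp: cf_def ee_def cos_swap cos_swap2 power_mult_distrib power_mult[symmetric] mult.commute power2_eq_square)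
  then show ?thesis by (simp only: dsum)
qed

definition bb :: "nat \<Rightarrow> real" where
  "bb k = real q powr (real (Suc k) * (s - 1)) / (real q ^ (2 * Suc k) - 1)^2"

lemma rq: "r^n * real q^n = real q powr (real n * (s - 1))"
proof -
  have qp: "0 < real q" using q2 by simp
  have "r^n * real q^n = real q powr (real n * (s - 2)) * real q powr (real n)"
    using qp by (simp add: a_eq powr_realpow)
  also have "\<dots> = real q powr (real n * (s - 1))" by (simp add: powr_add[symmetric] algebra_simps)
  finally show ?thesis .
qed

lemma ee_Suc: "ee t (Suc k) = - 4 * (normN q s)^2 * (bb k * cos ((real q ^ (2 * Suc k) - 1) * t))"
proof -
  have "ee t (Suc k) = - 4 * (normN q s)^2 * ((r^Suc k * real q^Suc k) / (real q ^ (2 * Suc k) - 1)^2 * cos ((real q ^ (2 * Suc k) - 1) * t))"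
    unfolding ee_def k0_def by (simp add: field_simps del: power_Suc)
  then show ?thesis unfolding rq bb_def .
qed

lemma X_ge: "real q ^ (2 * Suc k) - 1 \<ge> 1"
proof -
  have "real q ^ (2 * Suc k) \<ge> real q ^ 2" using q2 by (intro power_increasing) auto
  moreover have "real q ^ 2 \<ge> 2^2" using q2 by (intro power_mono) auto
  ultimately show ?thesis by simp
qed

lemma bb_le: "\<bar>bb k\<bar> \<le> real q powr (real (Suc k) * (s - 1)) / (real q ^ (2 * Suc k) - 1)"
proof -
  define Y where "Y = real q ^ (2 * Suc k) - 1"
  have Y: "Y \<ge> 1" using X_ge unfolding Y_def .
  have "0 \<le> bb k" unfolding bb_def by simp
  then have "\<bar>bb k\<bar> = real q powr (real (Suc k) * (s - 1)) / Y^2" unfolding bb_def Y_def by simp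
  also have "\<dots> \<le> real q powr (real (Suc k) * (s - 1)) / Y"
    using Y by (intro divide_left_mono) (auto simp: power2_eq_square)
  finally show ?thesis unfolding Y_def .
qed

lemma summable_bb_cos: "summable (\<lambda>k. bb k * cos (c k))"
proof (rule summable_comparison_test[OF _ summable_Mb], intro exI allI impI)
  fix k :: nat
  have "norm (bb k * cos (c k)) = \<bar>bb k\<bar> * \<bar>cos (c k)\<bar>" by (simp add: abs_mult)
  also have "\<dots> \<le> \<bar>bb k\<bar> * 1" by (intro mult_left_mono) auto
  finally show "norm (bb k * cos (c k)) \<le> real q powr (real (Suc k) * (s - 1)) / (real q ^ (2 * Suc k) - 1)"
    using bb_le[of k] by simp
qed

lemma psum_bound: "\<bar>\<Sum>n<k. Uc q s t n x\<bar> \<le> 1 / (1 - r)" "\<bar>\<Sum>n<k. Vs q s t n x\<bar> \<le> 1 / (1 - r)"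
proof -
  have g: "(\<Sum>n<k. r^n) \<le> 1 / (1 - r)"
    using sum_le_suminf[OF summable_r, of "{..<k}"] r_pos r_lt1 suminf_geometric[of r] by auto
  have "\<bar>\<Sum>n<k. Uc q s t n x\<bar> \<le> (\<Sum>n<k. \<bar>Uc q s t n x\<bar>)" by (rule sum_abs)
  also have "\<dots> \<le> (\<Sum>n<k. r^n)" by (intro sum_mono Uc_bound)
  finally show "\<bar>\<Sum>n<k. Uc q s t n x\<bar> \<le> 1 / (1 - r)" using g by linarith
  have "\<bar>\<Sum>n<k. Vs q s t n x\<bar> \<le> (\<Sum>n<k. \<bar>Vs q s t n x\<bar>)" by (rule sum_abs)
  also have "\<dots> \<le> (\<Sum>n<k. r^n)" by (intro sum_mono Vs_bound)
  finally show "\<bar>\<Sum>n<k. Vs q s t n x\<bar> \<le> 1 / (1 - r)" using g by linarith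
qed

lemma summable_ee: "summable (\<lambda>k. ee t (Suc k))"
  unfolding ee_Suc by (intro summable_mult summable_bb_cos)

lemma avgx_eq: "avgx q s t = (normN q s)^2 * pi^2/4 * (1 / (1 - r^2)) + (if even q then 2 * (\<Sum>k. ee t (Suc k)) else 0)"
proof -
  define R where "R = 1 / (1 - r)"
  define h where "h = (\<lambda>x::real. (normN q s)^2 * pi * (R^2 + R^2))"
  have lim1: "(\<lambda>k. integral {0..pi} (fk t k)) \<longlonglongrightarrow> integral {0..pi} (\<lambda>x. x * Pdens q s x t)"
  proof (rule dominated_convergence(2))
    show "fk t k integrable_on {0..pi}" for k using fk_int by blast
    show "h integrable_on {0..pi}" unfolding h_def by blast
    show "norm (fk t k x) \<le> h x" if "x \<in> {0..pi}" for k x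
    proof -
      have x: "0 \<le> x" "x \<le> pi" using that by auto
      have A: "(\<Sum>n<k. Uc q s t n x)^2 \<le> R^2" using psum_bound(1)[where k=k and t=t and x=x] unfolding R_def
        by (metis abs_ge_zero order_trans power2_abs power_mono)
      have B: "(\<Sum>n<k. Vs q s t n x)^2 \<le> R^2" using psum_bound(2)[where k=k and t=t and x=x] unfolding R_def
        by (metis abs_ge_zero order_trans power2_abs power_mono)
      have "norm (fk t k x) = (normN q s)^2 * (x * ((\<Sum>n<k. Uc q s t n x)^2 + (\<Sum>n<k. Vs q s t n x)^2))"
        unfolding fk_def using x by (simp add: abs_mult)
      also have "\<dots> \<le> (normN q s)^2 * (pi * (R^2 + R^2))"
        using x A B by (intro mult_left_mono mult_mono add_mono) auto
      finally show ?thesis unfolding h_def by simp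
    qed
    show "(\<lambda>k. fk t k x) \<longlonglongrightarrow> x * Pdens q s x t" if "x \<in> {0..pi}" for x
    proof -
      have "x * Pdens q s x t = (normN q s)^2 * x * ((\<Sum>n. Uc q s t n x)^2 + (\<Sum>n. Vs q s t n x)^2)"
        by (simp add: Pdens_eq)
      then show ?thesis unfolding fk_def
        by (simp only:) (intro tendsto_intros summable_LIMSEQ summable_Uc summable_Vs)
    qed
  qed
  have eqk: "integral {0..pi} (fk t k) = (\<Sum>n<k. (normN q s)^2 * pi^2/4 * (r^2)^n) + (if even q then 2 * (\<Sum>n<k. if n = 0 then 0 else ee t n) else 0)" for k
    using fk_int[where t=t and k=k] D_eq[where t=t and k=k] by (simp add: integral_unique)
  have r2: "\<bar>r^2\<bar> < 1" using r_pos r_lt1 by (simp add: abs_less_iff power2_eq_square) (metis less_trans mult_strict_right_mono mult_1 r_pos)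
  have s1: "(\<lambda>n. (normN q s)^2 * pi^2/4 * (r^2)^n) sums ((normN q s)^2 * pi^2/4 * (1 / (1 - r^2)))"
    by (intro sums_mult geometric_sums ) (use r2 in simp)
  have s2': "(\<lambda>n. if n = 0 then 0 else ee t n) sums (\<Sum>k. ee t (Suc k))"
    using sums_Suc_iff[of "\<lambda>n. if n = 0 then 0 else ee t n" "\<Sum>k. ee t (Suc k)"] summable_ee[of t]
    by (simp add: summable_sums)
  have lim2: "(\<lambda>k. integral {0..pi} (fk t k)) \<longlonglongrightarrow> (normN q s)^2 * pi^2/4 * (1 / (1 - r^2)) + (if even q then 2 * (\<Sum>k. ee t (Suc k)) else 0)"
    unfolding eqk using s1 s2' unfolding sums_def by (intro tendsto_intros) auto
  show ?thesis unfolding avgx_def using LIMSEQ_unique[OF lim1 lim2] .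
qed
lemma gen_deriv: "(L::real) \<noteq> 0 \<Longrightarrow> ((\<lambda>t. c / L^2 * cos (L*t)) has_field_derivative -(c/L * sin(L*t))) (at t within S)"
proof -
  assume L: "L \<noteq> 0"
  have "((\<lambda>t. cos (L*t)) has_field_derivative (- sin(L*t) * L)) (at t within S)"
    by (auto intro!: derivative_eq_intros)
  from DERIV_cmult[OF this, of "c / L^2"]
  have "((\<lambda>t. c / L^2 * cos (L*t)) has_field_derivative c / L^2 * (- sin(L*t) * L)) (at t within S)" .
  moreover have "c / L^2 * (- sin (L*t) * L) = -(c/L * sin(L*t))" using L by (simp add: power2_eq_square)
  ultimately show ?thesis by simp
qed

lemma rho: "real q powr (2 * (s - 2)) = r^2"
  using q2 powr_nat[of "real q" 2 "s - 2"] by (simp add: r_def)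

lemma N2: "(normN q s)^2 = 2 / pi * (1 - real q powr (2 * (s - 2)))"
proof -
  have "r^2 < 1" using r_pos r_lt1 by (simp add: power2_eq_square) (metis less_trans mult_strict_right_mono mult_1 r_pos)
  then show ?thesis unfolding normN_def rho by simp
qed

lemma avgx_formula: "avgx q s t = pi / 2 - 16 / pi * (1 - real q powr (2 * (s - 2))) *
   (if even q then (\<Sum>k. real q powr (real (Suc k) * (s - 1)) / (real q ^ (2 * Suc k) - 1)\<^sup>2
                     * cos ((real q ^ (2 * Suc k) - 1) * t)) else 0)"
proof -
  have r21: "r^2 < 1" using r_pos r_lt1 by (simp add: power2_eq_square) (metis less_trans mult_strict_right_mono mult_1 r_pos)
  have a: "(normN q s)^2 * pi^2/4 * (1 / (1 - r^2)) = pi / 2"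
    unfolding N2 rho using r21 by (simp add: field_simps power2_eq_square)
  have b: "2 * (\<Sum>k. ee t (Suc k)) = - 16 / pi * (1 - real q powr (2 * (s - 2))) *
     (\<Sum>k. bb k * cos ((real q ^ (2 * Suc k) - 1) * t))"
    unfolding ee_Suc suminf_mult[OF summable_bb_cos] N2 by (simp add: field_simps)
  show ?thesis unfolding avgx_eq a using b by (simp add: bb_def)
qed

lemma deriv_part: "((\<lambda>t. \<Sum>k. real q powr (real (Suc k) * (s - 1)) / (real q ^ (2 * Suc k) - 1)\<^sup>2
                     * cos ((real q ^ (2 * Suc k) - 1) * t)) has_real_derivative
    - (\<Sum>k. real q powr (real (Suc k) * (s - 1)) / (real q ^ (2 * Suc k) - 1)
                     * sin ((real q ^ (2 * Suc k) - 1) * t))) (at t)"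
proof -
  define f where "f k t = real q powr (real (Suc k) * (s - 1)) / (real q ^ (2 * Suc k) - 1)\<^sup>2
                     * cos ((real q ^ (2 * Suc k) - 1) * t)" for k t
  define d where "d k t = real q powr (real (Suc k) * (s - 1)) / (real q ^ (2 * Suc k) - 1)
                     * sin ((real q ^ (2 * Suc k) - 1) * t)" for k t
  have df: "(f k has_field_derivative - d k t) (at t within UNIV)" for k t
  proof -
    have L: "real q ^ (2 * Suc k) - 1 \<noteq> 0" using X_ge[of k] by linarith
    show ?thesis unfolding f_def d_def by (rule gen_deriv[OF L])
  qed
  have bd: "norm (- d k t) \<le> real q powr (real (Suc k) * (s - 1)) / (real q ^ (2 * Suc k) - 1)" for k t
  proof -
    have p: "0 \<le> real q powr (real (Suc k) * (s - 1)) / (real q ^ (2 * Suc k) - 1)" using X_ge[of k] by simp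
    have "norm (- d k t) = real q powr (real (Suc k) * (s - 1)) / (real q ^ (2 * Suc k) - 1) * \<bar>sin ((real q ^ (2 * Suc k) - 1) * t)\<bar>"
      unfolding d_def by (simp only: norm_minus_cancel real_norm_def abs_minus_cancel abs_mult abs_of_nonneg[OF p])
    also have "\<dots> \<le> real q powr (real (Suc k) * (s - 1)) / (real q ^ (2 * Suc k) - 1) * 1"
      using p by (intro mult_left_mono) auto
    finally show ?thesis by simp
  qed
  have uc: "uniformly_convergent_on UNIV (\<lambda>n t. \<Sum>i<n. - d i t)"
    by (rule Weierstrass_m_test'[OF _ summable_Mb]) (rule bd)
  have sf: "summable (\<lambda>n. f n 0)" unfolding f_def using summable_bb_cos[of "\<lambda>_. 0"] by (simp add: bb_def)
  have "((\<lambda>t. \<Sum>n. f n t) has_field_derivative (\<Sum>n. - d n t)) (at t)"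
    by (rule has_field_derivative_series'(2)[OF convex_UNIV df uc _ sf]) auto
  moreover have "summable (\<lambda>n. d n t)"
  proof (rule summable_comparison_test[OF _ summable_Mb], intro exI allI impI)
    fix n :: nat
    show "norm (d n t) \<le> real q powr (real (Suc n) * (s - 1)) / (real q ^ (2 * Suc n) - 1)"
      using bd[of n t] by (simp only: norm_minus_cancel)
  qed
  ultimately show ?thesis unfolding f_def d_def by (simp add: suminf_minus)
qed

lemma dterm_summable_abs: "summable (\<lambda>k. \<bar>real q powr (real (Suc k) * (s - 1)) / (real q ^ (2 * Suc k) - 1)
                     * sin ((real q ^ (2 * Suc k) - 1) * t)\<bar>)"
proof (rule summable_comparison_test[OF _ summable_Mb], intro exI allI impI)
  fix k :: nat
  have p: "0 \<le> real q powr (real (Suc k) * (s - 1)) / (real q ^ (2 * Suc k) - 1)" using X_ge[of k] by simp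
  have "norm \<bar>real q powr (real (Suc k) * (s - 1)) / (real q ^ (2 * Suc k) - 1) * sin ((real q ^ (2 * Suc k) - 1) * t)\<bar>
     = real q powr (real (Suc k) * (s - 1)) / (real q ^ (2 * Suc k) - 1) * \<bar>sin ((real q ^ (2 * Suc k) - 1) * t)\<bar>"
    by (simp only: real_norm_def abs_abs abs_mult abs_of_nonneg[OF p])
  also have "\<dots> \<le> real q powr (real (Suc k) * (s - 1)) / (real q ^ (2 * Suc k) - 1) * 1"
    using p by (intro mult_left_mono) auto
  finally show "norm \<bar>real q powr (real (Suc k) * (s - 1)) / (real q ^ (2 * Suc k) - 1) * sin ((real q ^ (2 * Suc k) - 1) * t)\<bar>
     \<le> real q powr (real (Suc k) * (s - 1)) / (real q ^ (2 * Suc k) - 1)" by simp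
qed

lemma dterm_ul: "uniform_limit UNIV (\<lambda>n t. \<Sum>k<n. real q powr (real (Suc k) * (s - 1))
                     / (real q ^ (2 * Suc k) - 1) * sin ((real q ^ (2 * Suc k) - 1) * t))
   (\<lambda>t. \<Sum>k. real q powr (real (Suc k) * (s - 1))
                     / (real q ^ (2 * Suc k) - 1) * sin ((real q ^ (2 * Suc k) - 1) * t)) sequentially"
proof (rule Weierstrass_m_test[OF _ summable_Mb])
  fix k :: nat and t :: real
  have p: "0 \<le> real q powr (real (Suc k) * (s - 1)) / (real q ^ (2 * Suc k) - 1)" using X_ge[of k] by simp
  have "norm (real q powr (real (Suc k) * (s - 1)) / (real q ^ (2 * Suc k) - 1) * sin ((real q ^ (2 * Suc k) - 1) * t))
     = real q powr (real (Suc k) * (s - 1)) / (real q ^ (2 * Suc k) - 1) * \<bar>sin ((real q ^ (2 * Suc k) - 1) * t)\<bar>"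
    by (simp only: real_norm_def abs_abs abs_mult abs_of_nonneg[OF p])
  also have "\<dots> \<le> real q powr (real (Suc k) * (s - 1)) / (real q ^ (2 * Suc k) - 1) * 1"
    using p by (intro mult_left_mono) auto
  finally show "norm (real q powr (real (Suc k) * (s - 1)) / (real q ^ (2 * Suc k) - 1) * sin ((real q ^ (2 * Suc k) - 1) * t))
     \<le> real q powr (real (Suc k) * (s - 1)) / (real q ^ (2 * Suc k) - 1)" by simp
qed

end

theorem mainTheorem8:
  fixes q :: nat and s :: real
  assumes "q \<ge> 2" and "0 < s" and "s < 2"
  shows "(even q \<longrightarrow>
           (\<forall>t. avgx q s t = pi / 2 - 16 / pi * (1 - real q powr (2 * (s - 2))) *
              (\<Sum>k. real q powr (real (Suc k) * (s - 1)) / (real q ^ (2 * Suc k) - 1)\<^sup>2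
                     * cos ((real q ^ (2 * Suc k) - 1) * t)))
         \<and> (\<forall>t. (avgx q s has_real_derivative
              (16 / pi * (1 - real q powr (2 * (s - 2))) *
              (\<Sum>k. real q powr (real (Suc k) * (s - 1)) / (real q ^ (2 * Suc k) - 1)
                     * sin ((real q ^ (2 * Suc k) - 1) * t)))) (at t))
         \<and> continuous_on UNIV (deriv (avgx q s))
         \<and> (\<forall>t. summable (\<lambda>k. \<bar>real q powr (real (Suc k) * (s - 1)) / (real q ^ (2 * Suc k) - 1)
                     * sin ((real q ^ (2 * Suc k) - 1) * t)\<bar>))
         \<and> uniformly_convergent_on UNIV (\<lambda>n t. \<Sum>k<n. real q powr (real (Suc k) * (s - 1))
                     / (real q ^ (2 * Suc k) - 1) * sin ((real q ^ (2 * Suc k) - 1) * t)))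
       \<and> (odd q \<longrightarrow> (\<forall>t. avgx q s t = pi / 2))"
proof -
  define C where "C = 16 / pi * (1 - real q powr (2 * (s - 2)))"
  define G where "G t = (\<Sum>k. real q powr (real (Suc k) * (s - 1)) / (real q ^ (2 * Suc k) - 1)\<^sup>2
                     * cos ((real q ^ (2 * Suc k) - 1) * t))" for t
  define D where "D t = (\<Sum>k. real q powr (real (Suc k) * (s - 1)) / (real q ^ (2 * Suc k) - 1)
                     * sin ((real q ^ (2 * Suc k) - 1) * t))" for t
  have F: "avgx q s t = pi / 2 - C * (if even q then G t else 0)" for t
    using avgx_formula[OF assms(1) assms(3), of t] unfolding C_def G_def by simp
  have odd_part: "odd q \<longrightarrow> (\<forall>t. avgx q s t = pi / 2)" using F by simp
  have even_part: "even q \<longrightarrow> ((\<forall>t. avgx q s t = pi / 2 - C * G t)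
         \<and> (\<forall>t. (avgx q s has_real_derivative C * D t) (at t))
         \<and> continuous_on UNIV (deriv (avgx q s)))"
  proof
    assume ev: "even q"
    have A: "avgx q s = (\<lambda>t. pi / 2 - C * G t)" using F ev by (simp add: fun_eq_iff)
    have Dv: "(avgx q s has_real_derivative C * D t) (at t)" for t
    proof -
      have "(G has_real_derivative - D t) (at t)"
        using deriv_part[OF assms(1) assms(3), of t] unfolding G_def D_def by simp
      then have "((\<lambda>t. pi / 2 - C * G t) has_real_derivative 0 - C * (- D t)) (at t)"
        by (rule DERIV_diff[OF DERIV_const DERIV_cmult])
      then show ?thesis unfolding A by simp
    qed
    have dd: "deriv (avgx q s) = (\<lambda>t. C * D t)" using Dv DERIV_imp_deriv by blast
    have nz: "real q * (real q * real q ^ (2 * k)) \<noteq> 1" for k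
      using X_ge[OF assms(1) assms(3), of k] by simp
    have "continuous_on UNIV D"
      unfolding D_def
      by (rule uniform_limit_theorem[OF _ dterm_ul[OF assms(1) assms(3)]]) (auto intro!: always_eventually continuous_intros simp: nz)
    then have "continuous_on UNIV (deriv (avgx q s))" unfolding dd by (intro continuous_intros)
    then show "(\<forall>t. avgx q s t = pi / 2 - C * G t)
         \<and> (\<forall>t. (avgx q s has_real_derivative C * D t) (at t))
         \<and> continuous_on UNIV (deriv (avgx q s))" using A Dv by simp
  qed
  have u: "uniformly_convergent_on UNIV (\<lambda>n t. \<Sum>k<n. real q powr (real (Suc k) * (s - 1))
                     / (real q ^ (2 * Suc k) - 1) * sin ((real q ^ (2 * Suc k) - 1) * t))"
    by (rule uniformly_convergentI[OF dterm_ul[OF assms(1) assms(3)]])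
  show ?thesis using odd_part even_part u dterm_summable_abs[OF assms(1) assms(3)]
    unfolding C_def G_def D_def by blast
qed

end
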